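(* Let $A,B$ be unital Banach algebras and let $X$ be a Banach space which is simultaneously a left Banach $A$-module that is a left function module over $A$, and a right Banach $B$-module that is a right function module over $B$ (no compatibility between the two actions is assumed). Then $(a\cdot x)\cdot b=a\cdot(x\cdot b)$ for all $a\in A$, $x\in X$, $b\in B$; i.e. the two actions make $X$ an $A$-$B$-bimodule.
   Context: A unital Banach algebra has a unit of norm 1. A left Banach $A$-module is a Banach space $X$ with left action satisfying $1\cdot x=x$ and $\|a\cdot x\|\le\|a\|\|x\|$; right Banach modules analogously. $X$ is a left (resp. right) function module over $A$ (resp. $B$) if there exist a compact Hausdorff space $K$, a linear isometry $i\colon X\to C(K)$ and a contractive unital homomorphism $\theta$ from $A$ (resp. $B$) to $C(K)$ with $i(a\cdot x)=\theta(a)i(x)$ (resp. $i(x\cdot b)=i(x)\theta(b)$). *)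

theory Defs
  imports "HOL-Analysis.Analysis"
begin

text \<open>Complex Banach spaces are modelled as real Banach spaces (type class banach)
  together with a complex scalar multiplication extending the real one.\<close>

definition complex_banach_space :: "(complex \<Rightarrow> 'x::banach \<Rightarrow> 'x) \<Rightarrow> bool" where
  "complex_banach_space sm \<longleftrightarrow>
     (\<forall>r x. sm (complex_of_real r) x = scaleR r x) \<and>
     (\<forall>c d x. sm (c * d) x = sm c (sm d x)) \<and>
     (\<forall>c d x. sm (c + d) x = sm c x + sm d x) \<and>
     (\<forall>c x y. sm c (x + y) = sm c x + sm c y) \<and>
     (\<forall>c x. norm (sm c x) = cmod c * norm x)"

text \<open>Unital complex Banach algebra: the class real_normed_algebra_1 gives a
  submultiplicative norm and a unit of norm 1.\<close>

definition unital_complex_banach_algebra ::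
    "(complex \<Rightarrow> 'a::{real_normed_algebra_1,banach} \<Rightarrow> 'a) \<Rightarrow> bool" where
  "unital_complex_banach_algebra sm \<longleftrightarrow>
     complex_banach_space sm \<and>
     (\<forall>c a b. sm c (a * b) = sm c a * b \<and> sm c (a * b) = a * sm c b)"

definition left_banach_module ::
    "(complex \<Rightarrow> 'a::{real_normed_algebra_1,banach} \<Rightarrow> 'a) \<Rightarrow> (complex \<Rightarrow> 'x::banach \<Rightarrow> 'x)
     \<Rightarrow> ('a \<Rightarrow> 'x \<Rightarrow> 'x) \<Rightarrow> bool" where
  "left_banach_module smA smX act \<longleftrightarrow>
     (\<forall>a b x. act (a + b) x = act a x + act b x) \<and>
     (\<forall>a x y. act a (x + y) = act a x + act a y) \<and>
     (\<forall>c a x. act (smA c a) x = smX c (act a x)) \<and>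
     (\<forall>c a x. act a (smX c x) = smX c (act a x)) \<and>
     (\<forall>a b x. act (a * b) x = act a (act b x)) \<and>
     (\<forall>x. act 1 x = x) \<and>
     (\<forall>a x. norm (act a x) \<le> norm a * norm x)"

definition right_banach_module ::
    "(complex \<Rightarrow> 'b::{real_normed_algebra_1,banach} \<Rightarrow> 'b) \<Rightarrow> (complex \<Rightarrow> 'x::banach \<Rightarrow> 'x)
     \<Rightarrow> ('x \<Rightarrow> 'b \<Rightarrow> 'x) \<Rightarrow> bool" where
  "right_banach_module smB smX act \<longleftrightarrow>
     (\<forall>x a b. act x (a + b) = act x a + act x b) \<and>
     (\<forall>x y a. act (x + y) a = act x a + act y a) \<and>
     (\<forall>c x a. act x (smB c a) = smX c (act x a)) \<and>
     (\<forall>c x a. act (smX c x) a = smX c (act x a)) \<and>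
     (\<forall>x a b. act x (a * b) = act (act x a) b) \<and>
     (\<forall>x. act x 1 = x) \<and>
     (\<forall>x a. norm (act x a) \<le> norm x * norm a)"

text \<open>C(K) for a compact Hausdorff space K (given as a type with its topology):
  bounded continuous complex functions (bounded continuous functions, type bcontfun) with the sup norm;
  on compact K these are exactly all continuous functions.\<close>

definition complex_linear_isometry_into_CK ::
    "(complex \<Rightarrow> 'x::banach \<Rightarrow> 'x) \<Rightarrow> ('x \<Rightarrow> ('k::topological_space \<Rightarrow>\<^sub>C complex)) \<Rightarrow> bool" where
  "complex_linear_isometry_into_CK smX i \<longleftrightarrow>
     (\<forall>x y. i (x + y) = i x + i y) \<and>
     (\<forall>c x t. apply_bcontfun (i (smX c x)) t = c * apply_bcontfun (i x) t) \<and>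
     (\<forall>x. norm (i x) = norm x)"

definition contractive_unital_hom_into_CK ::
    "(complex \<Rightarrow> 'a::{real_normed_algebra_1,banach} \<Rightarrow> 'a)
     \<Rightarrow> ('a \<Rightarrow> ('k::topological_space \<Rightarrow>\<^sub>C complex)) \<Rightarrow> bool" where
  "contractive_unital_hom_into_CK smA \<theta> \<longleftrightarrow>
     (\<forall>a b. \<theta> (a + b) = \<theta> a + \<theta> b) \<and>
     (\<forall>c a t. apply_bcontfun (\<theta> (smA c a)) t = c * apply_bcontfun (\<theta> a) t) \<and>
     (\<forall>a b t. apply_bcontfun (\<theta> (a * b)) t = apply_bcontfun (\<theta> a) t * apply_bcontfun (\<theta> b) t) \<and>
     (\<forall>t. apply_bcontfun (\<theta> 1) t = 1) \<and>
     (\<forall>a. norm (\<theta> a) \<le> norm a)"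

text \<open>The existential over K in the paper becomes a universally quantified type
  variable in the theorem (it occurs only in the hypotheses).\<close>

definition left_function_module_on ::
    "'k::t2_space itself \<Rightarrow> (complex \<Rightarrow> 'a::{real_normed_algebra_1,banach} \<Rightarrow> 'a)
     \<Rightarrow> (complex \<Rightarrow> 'x::banach \<Rightarrow> 'x) \<Rightarrow> ('a \<Rightarrow> 'x \<Rightarrow> 'x) \<Rightarrow> bool" where
  "left_function_module_on _ smA smX act \<longleftrightarrow>
     compact (UNIV :: 'k set) \<and>
     (\<exists>(i :: 'x \<Rightarrow> ('k \<Rightarrow>\<^sub>C complex)) (\<theta> :: 'a \<Rightarrow> ('k \<Rightarrow>\<^sub>C complex)).
        complex_linear_isometry_into_CK smX i \<and> contractive_unital_hom_into_CK smA \<theta> \<and>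
        (\<forall>a x t. apply_bcontfun (i (act a x)) t = apply_bcontfun (\<theta> a) t * apply_bcontfun (i x) t))"

definition right_function_module_on ::
    "'k::t2_space itself \<Rightarrow> (complex \<Rightarrow> 'b::{real_normed_algebra_1,banach} \<Rightarrow> 'b)
     \<Rightarrow> (complex \<Rightarrow> 'x::banach \<Rightarrow> 'x) \<Rightarrow> ('x \<Rightarrow> 'b \<Rightarrow> 'x) \<Rightarrow> bool" where
  "right_function_module_on _ smB smX act \<longleftrightarrow>
     compact (UNIV :: 'k set) \<and>
     (\<exists>(i :: 'x \<Rightarrow> ('k \<Rightarrow>\<^sub>C complex)) (\<theta> :: 'b \<Rightarrow> ('k \<Rightarrow>\<^sub>C complex)).
        complex_linear_isometry_into_CK smX i \<and> contractive_unital_hom_into_CK smB \<theta> \<and>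
        (\<forall>x b t. apply_bcontfun (i (act x b)) t = apply_bcontfun (i x) t * apply_bcontfun (\<theta> b) t))"

end

theory Submission
  imports Defs
begin

lemma bcf_attains:
  fixes f :: "'k::topological_space \<Rightarrow>\<^sub>C 'b::real_normed_vector"
  assumes "compact (UNIV::'k set)"
  shows "\<exists>t. norm (apply_bcontfun f t) = norm f"
proof -
  obtain t where t: "\<forall>y\<in>UNIV. norm (apply_bcontfun f y) \<le> norm (apply_bcontfun f t)"
    using continuous_attains_sup[OF assms, of "\<lambda>x. norm (apply_bcontfun f x)"]
    by (auto intro!: continuous_intros)
  have "dist f 0 \<le> norm (apply_bcontfun f t)" by (rule dist_bound) (use t in simp)
  then have "norm f \<le> norm (apply_bcontfun f t)" by (simp add: dist_norm)
  with norm_bounded[of f t] show ?thesis by (intro exI[of _ t]) simp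
qed

lemma finite_chain_min:
  assumes "finite F" "F \<noteq> {}" "chain\<^sub>\<subseteq> F"
  shows "\<exists>M\<in>F. \<forall>A\<in>F. M \<subseteq> A"
  using assms
proof (induction F rule: finite_ne_induct)
  case (singleton x) then show ?case by auto
next
  case (insert x F)
  have "chain\<^sub>\<subseteq> F" using insert.prems by (auto simp: chain_subset_def)
  then obtain M where M: "M \<in> F" "\<forall>A\<in>F. M \<subseteq> A" using insert.IH by blast
  have "x \<subseteq> M \<or> M \<subseteq> x" using insert.prems M(1) by (auto simp: chain_subset_def)
  then show ?case
  proof
    assume "x \<subseteq> M" then show ?thesis using M by (intro bexI[of _ x]) auto
  next
    assume "M \<subseteq> x" then show ?thesis using M by (intro bexI[of _ M]) auto
  qed
qed

lemma chain_Inter_ne: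
  fixes D :: "'k::topological_space set set"
  assumes cpt: "compact (UNIV::'k set)"
    and D: "\<forall>A\<in>D. closed A \<and> A \<noteq> {}" and ch: "chain\<^sub>\<subseteq> D"
  shows "\<Inter>D \<noteq> {}"
proof -
  have fip: "UNIV \<inter> \<Inter>F' \<noteq> {}" if F': "finite F'" "F' \<subseteq> D" for F'
  proof (cases "F' = {}")
    case True then show ?thesis by simp
  next
    case False
    have "chain\<^sub>\<subseteq> F'" using ch F' by (auto simp: chain_subset_def)
    then obtain M where M: "M \<in> F'" "\<forall>A\<in>F'. M \<subseteq> A" using finite_chain_min F' False by blast
    have "M \<noteq> {}" using M D F' by auto
    moreover have "M \<subseteq> \<Inter>F'" using M by auto
    ultimately show ?thesis by auto
  qed
  have "UNIV \<inter> \<Inter>D \<noteq> {}"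
    using compact_imp_fip[OF cpt, of D] fip D by blast
  then show ?thesis by simp
qed

lemma zorn_min:
  assumes "S \<noteq> {}" "\<And>C. C \<subseteq> S \<Longrightarrow> chain\<^sub>\<subseteq> C \<Longrightarrow> C \<noteq> {} \<Longrightarrow> \<Inter>C \<in> S"
  shows "\<exists>M\<in>S. \<forall>X\<in>S. X \<subseteq> M \<longrightarrow> X = M"
proof -
  have "\<forall>C\<in>chains (uminus ` S). \<exists>U\<in>uminus ` S. \<forall>X\<in>C. X \<subseteq> U"
  proof
    fix C assume C: "C \<in> chains (uminus ` S)"
    show "\<exists>U\<in>uminus ` S. \<forall>X\<in>C. X \<subseteq> U"
    proof (cases "C = {}")
      case True then show ?thesis using assms(1) by auto
    next
      case False
      have sub: "uminus ` C \<subseteq> S" using C by (auto simp: chains_def)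
      have ch: "chain\<^sub>\<subseteq> (uminus ` C)" using C by (auto simp: chains_def chain_subset_def)
      have "\<Inter>(uminus ` C) \<in> S" using assms(2)[OF sub ch] False by auto
      then have "- \<Inter>(uminus ` C) \<in> uminus ` S" by blast
      moreover have "\<forall>X\<in>C. X \<subseteq> - \<Inter>(uminus ` C)" by blast
      ultimately show ?thesis by blast
    qed
  qed
  from Zorn_Lemma2[OF this] obtain M where M: "M \<in> uminus ` S" "\<forall>X\<in>uminus ` S. M \<subseteq> X \<longrightarrow> X = M"
    by blast
  then obtain M0 where M0: "M0 \<in> S" "M = - M0" by auto
  show ?thesis
  proof (intro bexI[of _ M0] ballI impI)
    fix X assume "X \<in> S" "X \<subseteq> M0"
    then have "- X \<in> uminus ` S" "M \<subseteq> - X" using M0 by auto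
    then have "- X = M" using M by blast
    then show "X = M0" using M0 by auto
  qed (use M0 in auto)
qed

lemma cs_complex:
  fixes a b :: "nat \<Rightarrow> complex"
  shows "cmod (\<Sum>k<m. a k * b k) \<le> sqrt (\<Sum>k<m. (cmod (a k))^2) * sqrt (\<Sum>k<m. (cmod (b k))^2)"
proof -
  have "cmod (\<Sum>k<m. a k * b k) \<le> (\<Sum>k<m. cmod (a k * b k))" by (rule norm_sum)
  also have "\<dots> = (\<Sum>k<m. \<bar>cmod (a k)\<bar> * \<bar>cmod (b k)\<bar>)" by (simp add: norm_mult)
  also have "\<dots> \<le> L2_set (\<lambda>k. cmod (a k)) {..<m} * L2_set (\<lambda>k. cmod (b k)) {..<m}"
    by (rule L2_set_mult_ineq)
  finally show ?thesis by (simp add: L2_set_def)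
qed


lemma transfer_ineq:
  fixes J :: "'x::banach \<Rightarrow> 'k1 \<Rightarrow> complex" and I :: "'x \<Rightarrow> 'k2 \<Rightarrow> complex"
    and smX :: "complex \<Rightarrow> 'x \<Rightarrow> 'x" and w :: "nat \<Rightarrow> 'x"
  assumes Jadd: "\<And>x y t. J (x + y) t = J x t + J y t"
    and Jsm: "\<And>c x t. J (smX c x) t = c * J x t"
    and Jbd: "\<And>x t. cmod (J x t) \<le> norm x"
    and Iadd: "\<And>x y t. I (x + y) t = I x t + I y t"
    and Ism: "\<And>c x t. I (smX c x) t = c * I x t"
    and Iatt: "\<And>x. \<exists>s. cmod (I x s) = norm x"
  shows "\<exists>s. (\<Sum>k<m. (cmod (J (w k) t))^2) \<le> (\<Sum>k<m. (cmod (I (w k) s))^2)"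
proof -
  have J0: "J 0 t' = 0" for t' using Jadd[of 0 0 t'] by simp
  have I0: "I 0 t' = 0" for t' using Iadd[of 0 0 t'] by simp
  have Jsum: "J (\<Sum>k\<in>A. x k) t' = (\<Sum>k\<in>A. J (x k) t')" if "finite A" for A x t'
    using that by (induction A rule: finite_induct) (auto simp: J0 Jadd)
  have Isum: "I (\<Sum>k\<in>A. x k) t' = (\<Sum>k\<in>A. I (x k) t')" if "finite A" for A x t'
    using that by (induction A rule: finite_induct) (auto simp: I0 Iadd)
  define z where "z = (\<Sum>k<m. smX (cnj (J (w k) t)) (w k))"
  define A where "A = (\<Sum>k<m. (cmod (J (w k) t))^2)"
  have A0: "A \<ge> 0" unfolding A_def by (auto intro: sum_nonneg)
  have "J z t = (\<Sum>k<m. cnj (J (w k) t) * J (w k) t)"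
    unfolding z_def by (simp add: Jsum Jsm)
  also have "\<dots> = (\<Sum>k<m. complex_of_real ((cmod (J (w k) t))^2))"
    by (intro sum.cong refl) (simp add: complex_norm_square[symmetric] mult.commute)
  also have "\<dots> = complex_of_real A" unfolding A_def by simp
  finally have "J z t = complex_of_real A" .
  then have "A \<le> norm z" using Jbd[of z t] A0 by simp
  obtain s where s: "cmod (I z s) = norm z" using Iatt by blast
  define B where "B = (\<Sum>k<m. (cmod (I (w k) s))^2)"
  have B0: "B \<ge> 0" unfolding B_def by (auto intro: sum_nonneg)
  have "I z s = (\<Sum>k<m. cnj (J (w k) t) * I (w k) s)"
    unfolding z_def by (simp add: Isum Ism)
  then have "cmod (I z s) \<le> sqrt (\<Sum>k<m. (cmod (cnj (J (w k) t)))^2) * sqrt B"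
    unfolding B_def using cs_complex by metis
  then have "A \<le> sqrt A * sqrt B" using s \<open>A \<le> norm z\<close> unfolding A_def by simp
  then have "A \<le> B"
  proof (cases "A = 0")
    case True then show ?thesis using B0 by simp
  next
    case False
    then have "sqrt A > 0" using A0 by simp
    have "sqrt A * sqrt A \<le> sqrt A * sqrt B"
      using \<open>A \<le> sqrt A * sqrt B\<close> A0 by (simp add: real_sqrt_mult_self)
    then have "sqrt A \<le> sqrt B" using \<open>sqrt A > 0\<close> mult_le_cancel_left_pos by blast
    then show ?thesis using real_sqrt_le_iff by blast
  qed
  then show ?thesis unfolding A_def B_def by blast
qed


locale core =
  fixes I :: "'x::banach \<Rightarrow> 'k::t2_space \<Rightarrow> complex" and smX :: "complex \<Rightarrow> 'x \<Rightarrow> 'x"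
    and T :: "'x \<Rightarrow> 'x" and S :: "'x \<Rightarrow> 'x" and g :: "'k \<Rightarrow> complex" and r :: real
  assumes cpt: "compact (UNIV::'k set)"
    and cont: "\<And>x. continuous_on UNIV (I x)"
    and Iadd: "\<And>x y t. I (x + y) t = I x t + I y t"
    and Ism: "\<And>c x t. I (smX c x) t = c * I x t"
    and Iatt: "\<And>x. \<exists>t. cmod (I x t) = norm x"
    and Ibd: "\<And>x t. cmod (I x t) \<le> norm x"
    and Tadd: "\<And>x y. T (x + y) = T x + T y"
    and Tsm: "\<And>c x. T (smX c x) = smX c (T x)"
    and Sg: "\<And>x t. I (S x) t = g t * I x t"
    and base: "\<And>u v (n::nat) t. \<exists>s. (cmod (I (T u) t))^2 + (\<Sum>k<n. (cmod (I (v k) t))^2)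
                  \<le> r^2 * (cmod (I u s))^2 + (\<Sum>k<n. (cmod (I (v k) s))^2)"
begin

definition Pr :: "'k set \<Rightarrow> bool" where
  "Pr E \<longleftrightarrow> (\<forall>u v (n::nat). \<forall>t\<in>E. \<exists>s\<in>E. (cmod (I (T u) t))^2 + (\<Sum>k<n. (cmod (I (v k) t))^2)
                  \<le> r^2 * (cmod (I u s))^2 + (\<Sum>k<n. (cmod (I (v k) s))^2))"

lemma Pr_UNIV: "Pr UNIV"
  unfolding Pr_def using base by blast

lemma contG: "continuous_on UNIV (\<lambda>s. r^2 * (cmod (I u s))^2 + (\<Sum>k<(n::nat). (cmod (I (v k) s))^2))"
  by (intro continuous_intros cont)

lemma contN: "continuous_on UNIV (\<lambda>s. cmod (I u s))"
  by (intro continuous_intros cont)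

lemma Idiff: "I (x - y) t = I x t - I y t"
  using Iadd[of "x - y" y t] by simp

lemma Tdiff: "T (x - y) = T x - T y"
  using Tadd[of "x - y" y] by simp

lemma compact_closed: "closed E \<Longrightarrow> compact E" for E :: "'k set"
  using compact_Int_closed[OF cpt, of E] by simp

lemma Pr_Inter:
  assumes C: "C \<noteq> {}" "chain\<^sub>\<subseteq> C" "\<forall>E\<in>C. closed E \<and> Pr E"
  shows "Pr (\<Inter>C)"
  unfolding Pr_def
proof (intro allI ballI)
  fix u v and n::nat and t assume t: "t \<in> \<Inter>C"
  define c0 where "c0 = (cmod (I (T u) t))^2 + (\<Sum>k<n. (cmod (I (v k) t))^2)"
  define G where "G = (\<lambda>s. r^2 * (cmod (I u s))^2 + (\<Sum>k<n. (cmod (I (v k) s))^2))"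
  have clG: "closed {s. c0 \<le> G s}"
    unfolding G_def by (rule closed_Collect_le) (intro continuous_intros cont)+
  define D where "D = (\<lambda>E. E \<inter> {s. c0 \<le> G s}) ` C"
  have "\<forall>A\<in>D. closed A \<and> A \<noteq> {}"
  proof
    fix A assume "A \<in> D"
    then obtain E where E: "E \<in> C" "A = E \<inter> {s. c0 \<le> G s}" unfolding D_def by blast
    have "closed A" using E C clG by auto
    moreover have "A \<noteq> {}" using C E t unfolding Pr_def c0_def G_def by fastforce
    ultimately show "closed A \<and> A \<noteq> {}" by blast
  qed
  moreover have "chain\<^sub>\<subseteq> D" using C(2) unfolding D_def chain_subset_def by blast
  ultimately have "\<Inter>D \<noteq> {}" using chain_Inter_ne[OF cpt] by blast
  then obtain s where "s \<in> \<Inter>D" by blast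
  then have "s \<in> \<Inter>C" "c0 \<le> G s" using C(1) unfolding D_def by auto
  then show "\<exists>s\<in>\<Inter>C. (cmod (I (T u) t))^2 + (\<Sum>k<n. (cmod (I (v k) t))^2)
                  \<le> r^2 * (cmod (I u s))^2 + (\<Sum>k<n. (cmod (I (v k) s))^2)"
    unfolding c0_def G_def by blast
qed

lemma Pr_peak:
  assumes E: "closed E" "Pr E" "t0 \<in> E" "\<forall>t\<in>E. cmod (I w t) \<le> cmod (I w t0)"
  shows "Pr {t\<in>E. cmod (I w t) = cmod (I w t0)}"
  unfolding Pr_def
proof (intro allI ballI)
  fix u v and n::nat and t assume t: "t \<in> {t\<in>E. cmod (I w t) = cmod (I w t0)}"
  define m where "m = cmod (I w t0)"
  define c0 where "c0 = (cmod (I (T u) t))^2 + (\<Sum>k<n. (cmod (I (v k) t))^2)"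
  define G where "G = (\<lambda>s. r^2 * (cmod (I u s))^2 + (\<Sum>k<n. (cmod (I (v k) s))^2))"
  show "\<exists>s\<in>{t\<in>E. cmod (I w t) = cmod (I w t0)}. (cmod (I (T u) t))^2 + (\<Sum>k<n. (cmod (I (v k) t))^2)
                  \<le> r^2 * (cmod (I u s))^2 + (\<Sum>k<n. (cmod (I (v k) s))^2)"
  proof (rule ccontr)
    assume neg: "\<not> ?thesis"
    then have neg': "\<forall>s\<in>E. c0 \<le> G s \<longrightarrow> cmod (I w s) \<noteq> m"
      unfolding c0_def G_def m_def by auto
    define A where "A = E \<inter> {s. c0 \<le> G s}"
    have clA: "closed A"
      unfolding A_def G_def using E(1) by (auto intro!: closed_Int closed_Collect_le continuous_intros cont)
    have "A \<noteq> {}" using E(2) t unfolding Pr_def A_def c0_def G_def by fastforce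
    then obtain sA where sA: "sA \<in> A" "\<forall>s\<in>A. cmod (I w s) \<le> cmod (I w sA)"
      using continuous_attains_sup[OF compact_closed[OF clA], of "\<lambda>s. cmod (I w s)"]
        continuous_on_subset[OF contN] by blast
    define m' where "m' = cmod (I w sA)"
    have "m' \<le> m" using sA E(4) unfolding A_def m_def m'_def by auto
    moreover have "m' \<noteq> m" using neg' sA unfolding A_def m'_def by auto
    ultimately have mm: "m' < m" by simp
    have m'0: "0 \<le> m'" unfolding m'_def by simp
    have dpos: "m^2 - m'^2 > 0" using mm m'0 by (simp add: power_strict_mono)
    obtain sG where sG: "\<forall>s\<in>UNIV. G s \<le> G sG"
      using continuous_attains_sup[OF cpt _ contG[where u=u and n=n and v=v]] unfolding G_def by blast
    obtain N :: nat where N: "(G sG - c0) / (m^2 - m'^2) < real N" using reals_Archimedean2 by blast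
    then have N': "G sG - c0 < real N * (m^2 - m'^2)" using dpos by (simp add: field_simps)
    define v' where "v' = v(n := smX (complex_of_real (sqrt (real N))) w)"
    have sq: "(cmod (I (v' n) s))^2 = real N * (cmod (I w s))^2" for s
      unfolding v'_def by (simp add: Ism norm_mult power_mult_distrib)
    have sumv: "(\<Sum>k<Suc n. (cmod (I (v' k) s))^2) = (\<Sum>k<n. (cmod (I (v k) s))^2) + real N * (cmod (I w s))^2" for s
      by (simp add: sq[symmetric]) (simp add: v'_def)
    obtain s where s: "s \<in> E" "(cmod (I (T u) t))^2 + (\<Sum>k<Suc n. (cmod (I (v' k) t))^2)
                  \<le> r^2 * (cmod (I u s))^2 + (\<Sum>k<Suc n. (cmod (I (v' k) s))^2)"
      using E(2) t unfolding Pr_def by blast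
    then have ineq: "c0 + real N * m^2 \<le> G s + real N * (cmod (I w s))^2"
      using t unfolding c0_def G_def m_def sumv by simp
    have "cmod (I w s) \<le> m" using E(4) s(1) unfolding m_def by auto
    then have "(cmod (I w s))^2 \<le> m^2" by (simp add: power_mono)
    then have "c0 \<le> G s" using ineq by (smt (verit) mult_left_mono of_nat_0_le_iff)
    then have "s \<in> A" using s(1) unfolding A_def by simp
    then have "cmod (I w s) \<le> m'" using sA unfolding m'_def by blast
    then have "(cmod (I w s))^2 \<le> m'^2" by (simp add: power_mono)
    then have "real N * (cmod (I w s))^2 \<le> real N * m'^2" by (simp add: mult_left_mono)
    then have "G s \<ge> c0 + real N * (m^2 - m'^2)" using ineq by (simp add: algebra_simps)
    moreover have "G s \<le> G sG" using sG by blast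
    ultimately show False using N' by linarith
  qed
qed


lemma commute: "T (S x) = S (T x)"
proof -
  define y where "y = T (S x) - S (T x)"
  obtain t1 where t1: "cmod (I y t1) = norm y" using Iatt by blast
  define E0 where "E0 = {t\<in>UNIV. cmod (I y t) = cmod (I y t1)}"
  define Fam where "Fam = {E. closed E \<and> E \<noteq> {} \<and> E \<subseteq> E0 \<and> Pr E}"
  have "E0 \<in> Fam"
  proof -
    have "closed E0" unfolding E0_def by (simp add: closed_Collect_eq contN)
    moreover have "Pr E0" unfolding E0_def
      by (rule Pr_peak) (use Pr_UNIV Ibd t1 in auto)
    moreover have "t1 \<in> E0" unfolding E0_def by simp
    ultimately show ?thesis unfolding Fam_def by blast
  qed
  have "\<exists>M\<in>Fam. \<forall>X\<in>Fam. X \<subseteq> M \<longrightarrow> X = M"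
  proof (rule zorn_min)
    show "Fam \<noteq> {}" using \<open>E0 \<in> Fam\<close> by blast
  next
    fix C assume C: "C \<subseteq> Fam" "chain\<^sub>\<subseteq> C" "C \<noteq> {}"
    have "closed (\<Inter>C)" using C unfolding Fam_def by auto
    moreover have "\<Inter>C \<noteq> {}" using chain_Inter_ne[OF cpt, of C] C unfolding Fam_def by auto
    moreover have "\<Inter>C \<subseteq> E0" using C unfolding Fam_def by auto
    moreover have "Pr (\<Inter>C)" using Pr_Inter[of C] C unfolding Fam_def by auto
    ultimately show "\<Inter>C \<in> Fam" unfolding Fam_def by blast
  qed
  then obtain E where E: "E \<in> Fam" and Emin: "\<forall>X\<in>Fam. X \<subseteq> E \<longrightarrow> X = E" by blast
  have Ecl: "closed E" "E \<noteq> {}" "E \<subseteq> E0" "Pr E" using E unfolding Fam_def by auto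
  have zero: "\<forall>t\<in>E. I w t = 0" if t0: "t0 \<in> E" "I w t0 = 0" for w t0
  proof -
    obtain tm where tm: "tm \<in> E" "\<forall>t\<in>E. cmod (I w t) \<le> cmod (I w tm)"
      using continuous_attains_sup[OF compact_closed[OF Ecl(1)] Ecl(2), of "\<lambda>s. cmod (I w s)"]
        continuous_on_subset[OF contN] by blast
    define E' where "E' = {t\<in>E. cmod (I w t) = cmod (I w tm)}"
    have "E' = E \<inter> {t. cmod (I w t) = cmod (I w tm)}" unfolding E'_def by auto
    moreover have "closed {t. cmod (I w t) = cmod (I w tm)}"
      by (rule closed_Collect_eq) (simp_all add: contN)
    ultimately have "closed E'" using Ecl(1) by auto
    moreover have "Pr E'" unfolding E'_def by (rule Pr_peak) (use Ecl tm in auto)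
    moreover have "tm \<in> E'" "E' \<subseteq> E0" unfolding E'_def using tm Ecl by auto
    ultimately have "E' \<in> Fam" unfolding Fam_def by blast
    moreover have "E' \<subseteq> E" unfolding E'_def by auto
    ultimately have "E' = E" using Emin by blast
    then have "cmod (I w t0) = cmod (I w tm)" using t0 unfolding E'_def by blast
    then show ?thesis using tm t0 by auto
  qed
  obtain t0 where t0: "t0 \<in> E" using Ecl(2) by blast
  show ?thesis
  proof (rule ccontr)
    assume ne: "T (S x) \<noteq> S (T x)"
    then have "y \<noteq> 0" unfolding y_def by simp
    define yv where "yv = I y t0"
    have "cmod yv = norm y" using t0 Ecl(3) t1 unfolding E0_def yv_def by auto
    then have yv0: "yv \<noteq> 0" using \<open>y \<noteq> 0\<close> by auto
    define c where "c = I (T y) t0 / yv"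
    have key: "I (T u) t0 = I u t0 * c" for u
    proof -
      define \<kappa> where "\<kappa> = I u t0 / yv"
      define w where "w = u - smX \<kappa> y"
      have "I w t0 = 0" unfolding w_def \<kappa>_def yv_def using yv0 unfolding yv_def by (simp add: Idiff Ism)
      then have wz: "\<forall>t\<in>E. I w t = 0" using zero t0 by blast
      obtain s where s: "s \<in> E" "(cmod (I (T w) t0))^2 + (\<Sum>k<(0::nat). (cmod (I (u0 k) t0))^2)
                  \<le> r^2 * (cmod (I w s))^2 + (\<Sum>k<(0::nat). (cmod (I (u0 k) s))^2)"
        using Ecl(4) t0 unfolding Pr_def by blast
      then have "I (T w) t0 = 0" using wz by simp
      moreover have "T w = T u - smX \<kappa> (T y)" unfolding w_def by (simp add: Tdiff Tsm)
      ultimately have "I (T u) t0 = \<kappa> * I (T y) t0" by (simp add: Idiff Ism)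
      then show ?thesis unfolding \<kappa>_def c_def by simp
    qed
    have "yv = I (T (S x)) t0 - I (S (T x)) t0" unfolding yv_def y_def by (simp add: Idiff)
    also have "\<dots> = 0" by (simp add: key Sg)
    finally show False using yv0 by simp
  qed
qed

end


theorem mainTheorem3:
  fixes smA :: "complex \<Rightarrow> 'a::{real_normed_algebra_1,banach} \<Rightarrow> 'a"
    and smB :: "complex \<Rightarrow> 'b::{real_normed_algebra_1,banach} \<Rightarrow> 'b"
    and smX :: "complex \<Rightarrow> 'x::banach \<Rightarrow> 'x"
    and actL :: "'a \<Rightarrow> 'x \<Rightarrow> 'x"
    and actR :: "'x \<Rightarrow> 'b \<Rightarrow> 'x"
  assumes "unital_complex_banach_algebra smA"
    and "unital_complex_banach_algebra smB"
    and "complex_banach_space smX"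
    and "left_banach_module smA smX actL"
    and "right_banach_module smB smX actR"
    and "left_function_module_on TYPE('k1::t2_space) smA smX actL"
    and "right_function_module_on TYPE('k2::t2_space) smB smX actR"
  shows "\<forall>a x b. actR (actL a x) b = actL a (actR x b)"
proof (intro allI)
  fix a x b
  have LM: "\<And>a x y. actL a (x + y) = actL a x + actL a y" "\<And>c a x. actL a (smX c x) = smX c (actL a x)"
    using assms(4) unfolding left_banach_module_def by auto
  obtain i1 :: "'x \<Rightarrow> ('k1 \<Rightarrow>\<^sub>C complex)" and th1 :: "'a \<Rightarrow> ('k1 \<Rightarrow>\<^sub>C complex)"
    where cpt1: "compact (UNIV :: 'k1 set)" and i1: "complex_linear_isometry_into_CK smX i1"
      and th1: "contractive_unital_hom_into_CK smA th1"
      and act1: "\<forall>a x t. apply_bcontfun (i1 (actL a x)) t = apply_bcontfun (th1 a) t * apply_bcontfun (i1 x) t"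
    using assms(6) unfolding left_function_module_on_def by blast
  obtain i2 :: "'x \<Rightarrow> ('k2 \<Rightarrow>\<^sub>C complex)" and th2 :: "'b \<Rightarrow> ('k2 \<Rightarrow>\<^sub>C complex)"
    where cpt2: "compact (UNIV :: 'k2 set)" and i2: "complex_linear_isometry_into_CK smX i2"
      and act2: "\<forall>x b t. apply_bcontfun (i2 (actR x b)) t = apply_bcontfun (i2 x) t * apply_bcontfun (th2 b) t"
    using assms(7) unfolding right_function_module_on_def by blast
  define I1 where "I1 = (\<lambda>x t. apply_bcontfun (i1 x) t)"
  define I2 where "I2 = (\<lambda>x t. apply_bcontfun (i2 x) t)"
  have I1add: "\<And>x y t. I1 (x + y) t = I1 x t + I1 y t"
    using i1 unfolding complex_linear_isometry_into_CK_def I1_def by (simp add: plus_bcontfun.rep_eq)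
  have I1sm: "\<And>c x t. I1 (smX c x) t = c * I1 x t"
    using i1 unfolding complex_linear_isometry_into_CK_def I1_def by simp
  have I1bd: "\<And>x t. cmod (I1 x t) \<le> norm x"
  proof -
    fix x t show "cmod (I1 x t) \<le> norm x"
      using i1 norm_bounded[of "i1 x" t] unfolding complex_linear_isometry_into_CK_def I1_def by simp
  qed
  have I1att: "\<And>x. \<exists>s. cmod (I1 x s) = norm x"
  proof -
    fix x show "\<exists>s. cmod (I1 x s) = norm x"
      using i1 bcf_attains[OF cpt1, of "i1 x"] unfolding complex_linear_isometry_into_CK_def I1_def by simp
  qed
  have I2add: "\<And>x y t. I2 (x + y) t = I2 x t + I2 y t"
    using i2 unfolding complex_linear_isometry_into_CK_def I2_def by (simp add: plus_bcontfun.rep_eq)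
  have I2sm: "\<And>c x t. I2 (smX c x) t = c * I2 x t"
    using i2 unfolding complex_linear_isometry_into_CK_def I2_def by simp
  have I2bd: "\<And>x t. cmod (I2 x t) \<le> norm x"
  proof -
    fix x t show "cmod (I2 x t) \<le> norm x"
      using i2 norm_bounded[of "i2 x" t] unfolding complex_linear_isometry_into_CK_def I2_def by simp
  qed
  have I2att: "\<And>x. \<exists>s. cmod (I2 x s) = norm x"
  proof -
    fix x show "\<exists>s. cmod (I2 x s) = norm x"
      using i2 bcf_attains[OF cpt2, of "i2 x"] unfolding complex_linear_isometry_into_CK_def I2_def by simp
  qed
  have th1bd: "cmod (apply_bcontfun (th1 a) t) \<le> norm a" for t
    using norm_bounded[of "th1 a" t] th1 unfolding contractive_unital_hom_into_CK_def by (meson order_trans)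
  have base: "\<exists>s. (cmod (I2 (actL a u) t))^2 + (\<Sum>k<n. (cmod (I2 (v k) t))^2)
                  \<le> (norm a)^2 * (cmod (I2 u s))^2 + (\<Sum>k<n. (cmod (I2 (v k) s))^2)" for u and v :: "nat \<Rightarrow> 'x" and n :: nat and t
  proof -
    define w where "w = (\<lambda>k. if k = 0 then actL a u else v (k - 1))"
    obtain s1 where s1: "(\<Sum>k<Suc n. (cmod (I2 (w k) t))^2) \<le> (\<Sum>k<Suc n. (cmod (I1 (w k) s1))^2)"
      using transfer_ineq[of I2 smX I1, OF I2add I2sm I2bd I1add I1sm I1att] by blast
    define w' where "w' = (\<lambda>k. if k = 0 then smX (complex_of_real (norm a)) u else v (k - 1))"
    obtain s where s: "(\<Sum>k<Suc n. (cmod (I1 (w' k) s1))^2) \<le> (\<Sum>k<Suc n. (cmod (I2 (w' k) s))^2)"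
      using transfer_ineq[of I1 smX I2, OF I1add I1sm I1bd I2add I2sm I2att] by blast
    have "cmod (I1 (actL a u) s1) \<le> norm a * cmod (I1 u s1)"
      using act1 th1bd[of s1] unfolding I1_def by (simp add: norm_mult mult_right_mono)
    then have "(cmod (I1 (actL a u) s1))^2 \<le> (norm a * cmod (I1 u s1))^2"
      by (simp add: power_mono)
    have sw: "(\<Sum>k<Suc n. h (w k)) = h (actL a u) + (\<Sum>k<n. h (v k))" for h :: "'x \<Rightarrow> real"
      unfolding w_def by (subst sum.lessThan_Suc_shift) simp
    have sw': "(\<Sum>k<Suc n. h (w' k)) = h (smX (complex_of_real (norm a)) u) + (\<Sum>k<n. h (v k))" for h :: "'x \<Rightarrow> real"
      unfolding w'_def by (subst sum.lessThan_Suc_shift) simp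
    have e1: "(cmod (I1 (smX (complex_of_real (norm a)) u) s1))^2 = (norm a * cmod (I1 u s1))^2"
      by (simp add: I1sm norm_mult)
    have e2: "(cmod (I2 (smX (complex_of_real (norm a)) u) s))^2 = (norm a)^2 * (cmod (I2 u s))^2"
      by (simp add: I2sm norm_mult power_mult_distrib)
    from s1 s \<open>(cmod (I1 (actL a u) s1))^2 \<le> (norm a * cmod (I1 u s1))^2\<close>
    show ?thesis
      unfolding sw[of "\<lambda>x. (cmod (I2 x t))^2"] sw[of "\<lambda>x. (cmod (I1 x s1))^2"]
        sw'[of "\<lambda>x. (cmod (I1 x s1))^2"] sw'[of "\<lambda>x. (cmod (I2 x s))^2"] e1 e2
      by (intro exI[of _ s]) linarith
  qed
  interpret core I2 smX "actL a" "\<lambda>x. actR x b" "apply_bcontfun (th2 b)" "norm a"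
  proof
    show "compact (UNIV :: 'k2 set)" by (rule cpt2)
  next
    show "\<And>x. continuous_on UNIV (I2 x)" unfolding I2_def by simp
  qed (use I2add I2sm I2att I2bd LM act2 base in \<open>auto simp: I2_def mult.commute\<close>)
  show "actR (actL a x) b = actL a (actR x b)" using commute[of x] by simp
qed

end
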